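(* Let $A$ be a commutative ring and $L$ a finitely generated projective $A$-module of constant rank $1$. If $L_1,\dots,L_n$ are finitely many $A$-submodules of $L$ with $L=\bigcup_{k=1}^n L_k$, then $L=L_k$ for some $k$. *)

theory Defs
  imports Main "HOL.Modules"
begin

text \<open>Modules over a commutative ring A (type class comm_ring_1) are modelled with the
HOL locale module (from Modules.thy): the module is the type 'b, with scalar multiplication
scale.\<close>

definition prime_ideal :: "'a::comm_ring_1 set \<Rightarrow> bool" where
  "prime_ideal P \<longleftrightarrow>
     0 \<in> P \<and> (\<forall>x\<in>P. \<forall>y\<in>P. x + y \<in> P) \<and> (\<forall>a x. x \<in> P \<longrightarrow> a * x \<in> P)
     \<and> 1 \<notin> P \<and> (\<forall>a b. a * b \<in> P \<longrightarrow> a \<in> P \<or> b \<in> P)"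

text \<open>Finitely generated projective: a direct summand (retract) of a finite free module A^n.
A^n is represented by the functions v :: nat => 'a with v i = 0 for i >= n; f : L -> A^n and
g : A^n -> L are A-linear with g o f = id.\<close>

definition fg_projective :: "('a::comm_ring_1 \<Rightarrow> 'b::ab_group_add \<Rightarrow> 'b) \<Rightarrow> bool" where
  "fg_projective scale \<longleftrightarrow>
     (\<exists>(n::nat) (f::'b \<Rightarrow> nat \<Rightarrow> 'a) (g::(nat \<Rightarrow> 'a) \<Rightarrow> 'b).
        (\<forall>x. \<forall>i\<ge>n. f x i = 0) \<and>
        (\<forall>x y. f (x + y) = (\<lambda>i. f x i + f y i)) \<and>
        (\<forall>c x. f (scale c x) = (\<lambda>i. c * f x i)) \<and>
        (\<forall>v w. (\<forall>i\<ge>n. v i = 0) \<longrightarrow> (\<forall>i\<ge>n. w i = 0) \<longrightarrow>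
                g (\<lambda>i. v i + w i) = g v + g w) \<and>
        (\<forall>c v. (\<forall>i\<ge>n. v i = 0) \<longrightarrow> g (\<lambda>i. c * v i) = scale c (g v)) \<and>
        (\<forall>x. g (f x) = x))"

text \<open>The localization L_P is free of rank 1 over A_P, written out in elements:
there is x in L such that x/1 is a basis of L_P, i.e. the A_P-linear map A_P -> L_P,
a/u |-> a x/u, is injective (a x/u = 0 in L_P implies a/u = 0 in A_P) and surjective
(every y/t in L_P equals some (a/u) (x/1)).  Any basis element y/t may be replaced by y/1,
since t is a unit in A_P, so this is exactly freeness of rank 1.\<close>

definition localization_free_rank1 ::
  "('a::comm_ring_1 \<Rightarrow> 'b::ab_group_add \<Rightarrow> 'b) \<Rightarrow> 'a set \<Rightarrow> bool" where
  "localization_free_rank1 scale P \<longleftrightarrow>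
     (\<exists>x::'b.
        (\<forall>a::'a. (\<exists>s. s \<notin> P \<and> scale s (scale a x) = 0) \<longrightarrow> (\<exists>s. s \<notin> P \<and> s * a = 0)) \<and>
        (\<forall>(y::'b) (t::'a). t \<notin> P \<longrightarrow>
           (\<exists>a u s. u \<notin> P \<and> s \<notin> P \<and> scale s (scale u y - scale t (scale a x)) = 0)))"

definition constant_rank_one :: "('a::comm_ring_1 \<Rightarrow> 'b::ab_group_add \<Rightarrow> 'b) \<Rightarrow> bool" where
  "constant_rank_one scale \<longleftrightarrow> (\<forall>P. prime_ideal P \<longrightarrow> localization_free_rank1 scale P)"

end

theory Submission
  imports Defs
begin

definition my_ideal :: "'a::comm_ring_1 set \<Rightarrow> bool" where
  "my_ideal I \<longleftrightarrow> 0 \<in> I \<and> (\<forall>x\<in>I. \<forall>y\<in>I. x + y \<in> I) \<and> (\<forall>a x. x \<in> I \<longrightarrow> a * x \<in> I)"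

lemma prime_exists:
  fixes I :: "'a::comm_ring_1 set"
  assumes I: "my_ideal I" and one: "1 \<notin> I"
  shows "\<exists>P. prime_ideal P \<and> I \<subseteq> P"
proof -
  define A where "A = {J::'a set. my_ideal J \<and> I \<subseteq> J \<and> 1 \<notin> J}"
  have "\<forall>C\<in>chains A. \<exists>U\<in>A. \<forall>X\<in>C. X \<subseteq> U"
  proof
    fix C assume C: "C \<in> chains A"
    show "\<exists>U\<in>A. \<forall>X\<in>C. X \<subseteq> U"
    proof (cases "C = {}")
      case True then show ?thesis using I one by (auto simp: A_def)
    next
      case False
      have CA: "C \<subseteq> A" and ch: "\<And>X Y. X \<in> C \<Longrightarrow> Y \<in> C \<Longrightarrow> X \<subseteq> Y \<or> Y \<subseteq> X"
        using C by (auto simp: chains_def chain_subset_def)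
      have "\<Union>C \<in> A"
        unfolding A_def my_ideal_def
      proof (intro CollectI conjI ballI allI impI)
        show "0 \<in> \<Union>C" using False CA by (auto simp: A_def my_ideal_def)
        show "I \<subseteq> \<Union>C" using False CA by (auto simp: A_def)
        show "1 \<notin> \<Union>C" using CA by (auto simp: A_def)
        fix x y assume "x \<in> \<Union>C" "y \<in> \<Union>C"
        then obtain X Y where "X \<in> C" "Y \<in> C" "x \<in> X" "y \<in> Y" by auto
        with ch[of X Y] CA show "x + y \<in> \<Union>C"
          unfolding A_def my_ideal_def by blast
      next
        fix a x assume "x \<in> \<Union>C"
        then show "a * x \<in> \<Union>C" using CA unfolding A_def my_ideal_def by blast
      qed
      then show ?thesis by blast
    qed
  qed
  from Zorn_Lemma2[OF this] obtain M where MA: "M \<in> A" and Mmax: "\<And>X. X \<in> A \<Longrightarrow> M \<subseteq> X \<Longrightarrow> X = M"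
    by blast
  have Mi: "my_ideal M" "I \<subseteq> M" "1 \<notin> M" using MA by (auto simp: A_def)
  have ext: "\<exists>m r. m \<in> M \<and> 1 = m + r * a" if a: "a \<notin> M" for a
  proof (rule ccontr)
    assume nex: "\<not> ?thesis"
    define J where "J = {m + r * a | m r. m \<in> M}"
    have "J \<in> A" unfolding A_def my_ideal_def
    proof (intro CollectI conjI ballI allI impI)
      show "0 \<in> J" unfolding J_def using Mi(1) by (auto simp: my_ideal_def intro!: exI[of _ 0])
      show "I \<subseteq> J"
      proof
        fix x assume "x \<in> I"
        then have "x \<in> M" "x = x + 0 * a" using Mi(2) by auto
        then show "x \<in> J" unfolding J_def by blast
      qed
      show "1 \<notin> J" unfolding J_def using nex by auto
      fix x y assume "x \<in> J" "y \<in> J"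
      then obtain m1 r1 m2 r2 where "x = m1 + r1 * a" "y = m2 + r2 * a" "m1 \<in> M" "m2 \<in> M"
        unfolding J_def by auto
      then have "x + y = (m1 + m2) + (r1 + r2) * a" "m1 + m2 \<in> M"
        using Mi(1) unfolding my_ideal_def by (auto simp: algebra_simps)
      then show "x + y \<in> J" unfolding J_def by blast
    next
      fix b x assume "x \<in> J"
      then obtain m1 r1 where "x = m1 + r1 * a" "m1 \<in> M"
        unfolding J_def by auto
      then have "b * x = (b * m1) + (b * r1) * a" "b * m1 \<in> M"
        using Mi(1) unfolding my_ideal_def by (auto simp: algebra_simps)
      then show "b * x \<in> J" unfolding J_def by blast
    qed
    moreover have "M \<subseteq> J"
    proof
      fix x assume "x \<in> M"
      then have "x \<in> M" "x = x + 0 * a" by auto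
      then show "x \<in> J" unfolding J_def by blast
    qed
    ultimately have "J = M" using Mmax by blast
    moreover have "a \<in> J"
    proof -
      have "a = 0 + 1 * a" "(0::'a) \<in> M" using Mi(1) by (auto simp: my_ideal_def)
      then show ?thesis unfolding J_def by blast
    qed
    ultimately show False using a by simp
  qed
  have "prime_ideal M"
    unfolding prime_ideal_def
  proof (intro conjI ballI allI impI)
    show "0 \<in> M" "1 \<notin> M" using Mi by (auto simp: my_ideal_def)
    show "\<And>x y. x \<in> M \<Longrightarrow> y \<in> M \<Longrightarrow> x + y \<in> M" using Mi by (auto simp: my_ideal_def)
    show "\<And>a x. x \<in> M \<Longrightarrow> a * x \<in> M" using Mi by (auto simp: my_ideal_def)
    fix a b assume ab: "a * b \<in> M"
    show "a \<in> M \<or> b \<in> M"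
    proof (rule ccontr)
      assume "\<not> (a \<in> M \<or> b \<in> M)"
      then obtain m1 r1 m2 r2 where e: "m1 \<in> M" "1 = m1 + r1 * a" "m2 \<in> M" "1 = m2 + r2 * b"
        using ext by blast
      have "1 = (m1 + r1 * a) * (m2 + r2 * b)" using e by simp
      also have "\<dots> = (m1 * m2 + (r1 * a) * m2) + (m1 * (r2 * b) + (r1 * r2) * (a * b))"
        by (simp add: algebra_simps)
      also have "\<dots> \<in> M" using e ab Mi(1) unfolding my_ideal_def
        by (metis mult.commute)
      finally show False using Mi by simp
    qed
  qed
  then show ?thesis using Mi by blast
qed


lemma prod_notin:
  fixes P :: "'a::comm_ring_1 set"
  assumes P: "prime_ideal P" and fin: "finite S" and h: "\<And>x. x \<in> S \<Longrightarrow> f x \<notin> P"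
  shows "prod f S \<notin> P"
  using fin h
proof (induction S rule: finite_induct)
  case empty then show ?case using P by (simp add: prime_ideal_def)
next
  case (insert x F)
  then show ?case using P unfolding prime_ideal_def by (metis insertI1 insertI2 prod.insert)
qed

lemma prod_in:
  fixes P :: "'a::comm_ring_1 set"
  assumes P: "prime_ideal P" and fin: "finite S" and q: "q \<in> S" "f q \<in> P"
  shows "prod f S \<in> P"
proof -
  have "prod f S = prod f (S - {q}) * f q"
    using fin q by (simp add: prod.remove mult.commute)
  then show ?thesis using P q unfolding prime_ideal_def by auto
qed

lemma sum_in:
  fixes P :: "'a::comm_ring_1 set"
  assumes P: "prime_ideal P" and h: "\<And>x. x \<in> S \<Longrightarrow> f x \<in> P"
  shows "sum f S \<in> P"
  using h
proof (induction S rule: infinite_finite_induct)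
  case (infinite A) then show ?case using P by (simp add: prime_ideal_def)
next
  case empty then show ?case using P by (simp add: prime_ideal_def)
next
  case (insert x F)
  then show ?case using P unfolding prime_ideal_def by auto
qed

lemma add_notin:
  fixes P :: "'a::comm_ring_1 set"
  assumes P: "prime_ideal P" and "t \<notin> P" "r \<in> P"
  shows "t + r \<notin> P"
proof
  assume "t + r \<in> P"
  moreover have "(-1) * r \<in> P" using assms unfolding prime_ideal_def by blast
  ultimately have "(t + r) + (-1) * r \<in> P" using P unfolding prime_ideal_def by blast
  then show False using assms by simp
qed


theorem corollary4p10:
  fixes scale :: "'a::comm_ring_1 \<Rightarrow> 'b::ab_group_add \<Rightarrow> 'b"
    and Ls :: "nat \<Rightarrow> 'b set" and n :: nat
  assumes "module scale"
    and "fg_projective scale"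
    and "constant_rank_one scale"
    and "\<And>k. k \<in> {1..n} \<Longrightarrow> module.subspace scale (Ls k)"
    and "(\<Union>k\<in>{1..n}. Ls k) = UNIV"
  shows "\<exists>k\<in>{1..n}. Ls k = UNIV"
proof (rule ccontr)
  interpret M: module scale by fact
  assume "\<not> ?thesis"
  then have "\<forall>k\<in>{1..n}. \<exists>v. v \<notin> Ls k" by auto
  then obtain y where y: "\<And>k. k \<in> {1..n} \<Longrightarrow> y k \<notin> Ls k" by metis
  define I where "I k = {a. scale a (y k) \<in> Ls k}" for k
  have Iid: "my_ideal (I k) \<and> 1 \<notin> I k" if k: "k \<in> {1..n}" for k
  proof -
    have sub: "M.subspace (Ls k)" using assms(4) k by blast
    show ?thesis unfolding my_ideal_def I_def
      using y[OF k] M.subspace_0[OF sub] M.subspace_add[OF sub] M.subspace_scale[OF sub]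
      by (auto simp: M.scale_left_distrib) (metis M.scale_scale)
  qed
  have "\<forall>k\<in>{1..n}. \<exists>Q. prime_ideal Q \<and> I k \<subseteq> Q"
    using Iid prime_exists by blast
  then obtain Q where Q: "\<And>k. k \<in> {1..n} \<Longrightarrow> prime_ideal (Q k) \<and> I k \<subseteq> Q k" by metis
  define F where "F = Q ` {1..n}"
  have finF: "finite F" unfolding F_def by simp
  have "\<forall>k\<in>{1..n}. \<exists>m\<in>F. Q k \<subseteq> m \<and> (\<forall>b\<in>F. m \<subseteq> b \<longrightarrow> m = b)"
    using finite_has_maximal2[OF finF] unfolding F_def by blast
  then obtain Pk where Pk: "\<And>k. k \<in> {1..n} \<Longrightarrow> Pk k \<in> F \<and> Q k \<subseteq> Pk k \<and> (\<forall>b\<in>F. Pk k \<subseteq> b \<longrightarrow> Pk k = b)"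
    by metis
  define S where "S = Pk ` {1..n}"
  have finS: "finite S" unfolding S_def by simp
  have Sprime: "prime_ideal P" if "P \<in> S" for P
    using that Pk Q unfolding S_def F_def by force
  have Sinc: "\<not> Q' \<subseteq> P" if h1: "P \<in> S" and h2: "Q' \<in> S" and h3: "Q' \<noteq> P" for P Q'
  proof
    assume sub: "Q' \<subseteq> P"
    obtain k2 where k2: "k2 \<in> {1..n}" "Q' = Pk k2" using h2 unfolding S_def by blast
    have "P \<in> F" using h1 Pk unfolding S_def by blast
    then show False using Pk[OF k2(1)] k2(2) sub h3 by blast
  qed
  define G where "G P x = (\<forall>v. \<exists>a u s. u \<notin> P \<and> s \<notin> P \<and> scale (s * u) v = scale (s * a) x)" for P x
  have Gex: "\<exists>x. G P x" if P: "prime_ideal P" for P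
  proof -
    obtain x where x: "\<forall>(v::'b) (t::'a). t \<notin> P \<longrightarrow>
           (\<exists>a u s. u \<notin> P \<and> s \<notin> P \<and> scale s (scale u v - scale t (scale a x)) = 0)"
      using assms(3) P unfolding constant_rank_one_def localization_free_rank1_def by blast
    have "1 \<notin> P" using P by (simp add: prime_ideal_def)
    have "G P x" unfolding G_def
    proof
      fix v
      obtain a u s where "u \<notin> P" "s \<notin> P" "scale s (scale u v - scale 1 (scale a x)) = 0"
        using x \<open>1 \<notin> P\<close> by blast
      then show "\<exists>a u s. u \<notin> P \<and> s \<notin> P \<and> scale (s * u) v = scale (s * a) x"
        by (auto simp: M.scale_right_diff_distrib)
    qed
    then show ?thesis by blast
  qed
  define xg where "xg P = (SOME x. G P x)" for P
  have xg: "G P (xg P)" if "P \<in> S" for P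
    unfolding xg_def using Gex[OF Sprime[OF that]] by (rule someI_ex)
  have eex: "\<exists>e. e \<notin> P \<and> (\<forall>Q'\<in>S. Q' \<noteq> P \<longrightarrow> e \<in> Q')" if P: "P \<in> S" for P
  proof -
    have "\<forall>Q'\<in>S - {P}. \<exists>q. q \<in> Q' \<and> q \<notin> P" using Sinc[OF P] by blast
    then obtain q where q: "\<And>Q'. Q' \<in> S - {P} \<Longrightarrow> q Q' \<in> Q' \<and> q Q' \<notin> P" by metis
    have "prod q (S - {P}) \<notin> P"
      using prod_notin[OF Sprime[OF P]] finS q by blast
    moreover have "prod q (S - {P}) \<in> Q'" if "Q' \<in> S" "Q' \<noteq> P" for Q'
      using prod_in[OF Sprime[OF that(1)], of "S - {P}" Q' q] finS q that by blast
    ultimately show ?thesis by blast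
  qed
  then obtain e where e: "\<And>P. P \<in> S \<Longrightarrow> e P \<notin> P \<and> (\<forall>Q'\<in>S. Q' \<noteq> P \<longrightarrow> e P \<in> Q')"
    by metis
  define z where "z = (\<Sum>P\<in>S. scale (e P) (xg P))"
  obtain k where k: "k \<in> {1..n}" "z \<in> Ls k" using assms(5) by blast
  define P where "P = Pk k"
  have PS: "P \<in> S" unfolding P_def S_def using k by blast
  have Pp: "prime_ideal P" using Sprime[OF PS] .
  have IP: "I k \<subseteq> P" using Pk[OF k(1)] Q[OF k(1)] unfolding P_def by blast
  define x where "x = xg P"
  have Gx: "G P x" unfolding x_def using xg[OF PS] .
  have "\<forall>Q'\<in>S. \<exists>w b. w \<notin> P \<and> (Q' = P \<longrightarrow> b = 1) \<and> scale w (xg Q') = scale b x"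
  proof
    fix Q' assume "Q' \<in> S"
    show "\<exists>w b. w \<notin> P \<and> (Q' = P \<longrightarrow> b = 1) \<and> scale w (xg Q') = scale b x"
    proof (cases "Q' = P")
      case True
      have "(1::'a) \<notin> P" using Pp by (simp add: prime_ideal_def)
      then have "1 \<notin> P \<and> (Q' = P \<longrightarrow> (1::'a) = 1) \<and> scale 1 (xg Q') = scale 1 x"
        using True unfolding x_def by simp
      then show ?thesis by blast
    next
      case False
      obtain a u s where "u \<notin> P" "s \<notin> P" "scale (s * u) (xg Q') = scale (s * a) x"
        using Gx unfolding G_def by blast
      moreover have "s * u \<notin> P" using Pp \<open>u \<notin> P\<close> \<open>s \<notin> P\<close> unfolding prime_ideal_def by blast
      ultimately have "s * u \<notin> P \<and> (Q' = P \<longrightarrow> s * a = 1) \<and> scale (s * u) (xg Q') = scale (s * a) x"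
        using False by simp
      then show ?thesis by blast
    qed
  qed
  then obtain w b where wb: "\<And>Q'. Q' \<in> S \<Longrightarrow> w Q' \<notin> P \<and> (Q' = P \<longrightarrow> b Q' = 1) \<and> scale (w Q') (xg Q') = scale (b Q') x"
    by metis
  define W where "W = prod w S"
  have WP: "W \<notin> P" unfolding W_def using prod_notin[OF Pp finS] wb by blast
  define c where "c = (\<Sum>Q'\<in>S. e Q' * prod w (S - {Q'}) * b Q')"
  have "scale W z = (\<Sum>Q'\<in>S. scale (e Q') (scale W (xg Q')))"
    unfolding z_def by (simp add: M.scale_sum_right mult.commute)
  also have "\<dots> = (\<Sum>Q'\<in>S. scale (e Q' * prod w (S - {Q'}) * b Q') x)"
  proof (rule sum.cong)
    fix Q' assume Q': "Q' \<in> S"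
    have "W = prod w (S - {Q'}) * w Q'" unfolding W_def using finS Q' by (simp add: prod.remove mult.commute)
    then have "scale W (xg Q') = scale (prod w (S - {Q'})) (scale (w Q') (xg Q'))" by simp
    also have "\<dots> = scale (prod w (S - {Q'}) * b Q') x" using wb[OF Q'] by simp
    finally show "scale (e Q') (scale W (xg Q')) = scale (e Q' * prod w (S - {Q'}) * b Q') x"
      by (simp add: mult.assoc)
  qed simp
  also have "\<dots> = scale c x" unfolding c_def by (simp add: M.scale_sum_left)
  finally have Wz: "scale W z = scale c x" .
  have cP: "c \<notin> P"
  proof -
    have "c = e P * prod w (S - {P}) * b P + (\<Sum>Q'\<in>S - {P}. e Q' * prod w (S - {Q'}) * b Q')"
      unfolding c_def using finS PS by (simp add: sum.remove)
    moreover have "e P * prod w (S - {P}) * b P \<notin> P"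
    proof -
      have "prod w (S - {P}) \<notin> P" using prod_notin[OF Pp] finS wb by blast
      moreover have "e P \<notin> P" using e[OF PS] by blast
      ultimately have "e P * prod w (S - {P}) \<notin> P" using Pp unfolding prime_ideal_def by blast
      then show ?thesis using wb[OF PS] by simp
    qed
    moreover have "(\<Sum>Q'\<in>S - {P}. e Q' * prod w (S - {Q'}) * b Q') \<in> P"
    proof (rule sum_in[OF Pp])
      fix Q' assume "Q' \<in> S - {P}"
      then have "e Q' \<in> P" using e PS by blast
      then have "(prod w (S - {Q'}) * b Q') * e Q' \<in> P" using Pp unfolding prime_ideal_def by blast
      then show "e Q' * prod w (S - {Q'}) * b Q' \<in> P" by (simp add: ac_simps)
    qed
    ultimately show ?thesis using add_notin[OF Pp] by simp
  qed
  obtain a u s where aus: "u \<notin> P" "s \<notin> P" "scale (s * u) (y k) = scale (s * a) x"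
    using Gx unfolding G_def by blast
  have sub: "M.subspace (Ls k)" using assms(4) k by blast
  have "scale (c * (s * u)) (y k) = scale c (scale (s * u) (y k))" by simp
  also have "\<dots> = scale (s * a) (scale c x)" using aus(3) by (simp add: mult.commute)
  also have "\<dots> = scale (s * a) (scale W z)" using Wz by simp
  finally have "scale (c * (s * u)) (y k) \<in> Ls k" using M.subspace_scale[OF sub k(2)] by simp
  then have "c * (s * u) \<in> P" using IP unfolding I_def by blast
  then show False using cP aus Pp unfolding prime_ideal_def by blast
qed

end
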